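(* Let $\mathcal{H}$ be a real Hilbert space, let $A\colon \mathcal{H}\rightrightarrows\mathcal{H}$ be maximally monotone, and let $B\colon\mathcal{H}\to\mathcal{H}$ be monotone with $B=\frac{1}{n}\sum_{i=1}^nB_i$ where each $B_i\colon\mathcal{H}\to\mathcal{H}$ is $L$-Lipschitz. Let $x\in(A+B)^{-1}(0)$ and $\lambda \in \left(0,\frac{1}{2L}\right)$. Given $x_0,x_{-1}\in\mathcal{H}$ and indices $i_k\in\{1,\dots,n\}$ (e.g. chosen uniformly at random), let $$x_{k+1} = J_{\lambda A}\bigl( x_k-\lambda B(x_k) - \lambda( B_{i_k}(x_k) - B_{i_k}(x_{k-1})) \bigr)\quad\forall k\in\mathbb{N}.$$ Then there exists $\varepsilon>0$ such that, for all $k\in\mathbb{N}$ (and every realization of the indices), $$\|x_{k+1}-x\|^2+2\lambda\langle B(x_{k+1})-B(x_k),x-x_{k+1}\rangle + \left(\tfrac{1}{2}+\varepsilon\right)\|x_{k+1}-x_k\|^2 \leq \|x_k-x\|^2 + 2\lambda\langle B_{i_k}(x_k)-B_{i_k}(x_{k-1}), x-x_{k}\rangle +\tfrac{1}{2}\|x_{k}-x_{k-1}\|^2.$$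
   Context: $J_{\lambda A}:=(I+\lambda A)^{-1}$ denotes the resolvent of $\lambda A$. *)

theory Defs
  imports "HOL-Analysis.Analysis"
begin

definition monotone_op :: "('a::real_inner \<Rightarrow> 'a set) \<Rightarrow> bool" where
  "monotone_op A \<longleftrightarrow>
     (\<forall>x y u v. u \<in> A x \<longrightarrow> v \<in> A y \<longrightarrow> inner (u - v) (x - y) \<ge> 0)"

definition maximally_monotone :: "('a::real_inner \<Rightarrow> 'a set) \<Rightarrow> bool" where
  "maximally_monotone A \<longleftrightarrow> monotone_op A \<and>
     (\<forall>A'. monotone_op A' \<and> (\<forall>x. A x \<subseteq> A' x) \<longrightarrow> A' = A)"

text \<open>Resolvent J_{lam A} = (I + lam A)^{-1}, as a (single-valued, for maximally monotone A)
  function: the unique z with y \<in> z + lam A z.\<close>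

definition resolvent :: "real \<Rightarrow> ('a::real_inner \<Rightarrow> 'a set) \<Rightarrow> 'a \<Rightarrow> 'a" where
  "resolvent lam A y = (THE z. \<exists>a \<in> A z. y = z + lam *\<^sub>R a)"

end

theory Submission
  imports Defs
begin

lemma norm_add_scale_sq:
  fixes a b :: "'a::real_inner"
  shows "(norm (a + e *\<^sub>R b))\<^sup>2 = (norm a)\<^sup>2 + 2 * e * inner a b + e\<^sup>2 * (norm b)\<^sup>2"
  unfolding power2_norm_eq_inner by (simp add: inner_add_left inner_add_right algebra_simps power2_eq_square inner_commute)


lemma cont_Max:
  fixes f :: "'i \<Rightarrow> 'a::topological_space \<Rightarrow> real"
  assumes "finite S" "S \<noteq> {}" "\<And>i. i \<in> S \<Longrightarrow> continuous_on K (f i)"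
  shows "continuous_on K (\<lambda>z. Max ((\<lambda>i. f i z) ` S))"
  using assms
proof (induction S rule: finite_ne_induct)
  case (singleton x)
  then show ?case by simp
next
  case (insert x F)
  have "(\<lambda>z. Max ((\<lambda>i. f i z) ` insert x F)) = (\<lambda>z. max (f x z) (Max ((\<lambda>i. f i z) ` F)))"
    using insert by (auto simp: Max_insert)
  then show ?case using insert by (auto intro!: continuous_on_max)
qed

lemma sum_rep:
  fixes l :: "'i \<Rightarrow> real" and f :: "'i \<Rightarrow> 'b::real_vector" and c :: "'i \<Rightarrow> 'c"
  assumes "finite S" "J \<subseteq> S"
    and l: "l = (\<lambda>i. if i \<in> J \<and> i = inv_into J c (c i) then u (c i) else 0)"
  shows "(\<Sum>i\<in>S. l i *\<^sub>R f i) = (\<Sum>x\<in>c`J. u x *\<^sub>R f (inv_into J c x))"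
proof -
  define R where "R = inv_into J c ` (c ` J)"
  have RJ: "R \<subseteq> J" unfolding R_def by (auto intro: inv_into_into)
  have "(\<Sum>i\<in>S. l i *\<^sub>R f i) = (\<Sum>i\<in>R. l i *\<^sub>R f i)"
    by (rule sum.mono_neutral_right) (use assms RJ in \<open>auto simp: l R_def\<close>)
  also have "\<dots> = (\<Sum>x\<in>c`J. l (inv_into J c x) *\<^sub>R f (inv_into J c x))"
    unfolding R_def by (subst sum.reindex) (auto intro: inj_on_inv_into)
  also have "\<dots> = (\<Sum>x\<in>c`J. u x *\<^sub>R f (inv_into J c x))"
  proof (rule sum.cong)
    fix x assume "x \<in> c ` J"
    then show "l (inv_into J c x) *\<^sub>R f (inv_into J c x) = u x *\<^sub>R f (inv_into J c x)"
      unfolding l by (auto simp: inv_into_into f_inv_into_f)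
  qed simp
  finally show ?thesis .
qed



lemma finite_quad:
  fixes c :: "'i \<Rightarrow> 'a::real_inner" and r :: "'i \<Rightarrow> real"
  assumes fin: "finite S" and ne: "S \<noteq> {}"
    and H: "\<And>l. (\<forall>i\<in>S. 0 \<le> l i) \<Longrightarrow> sum l S = 1 \<Longrightarrow>
         (\<Sum>i\<in>S. l i * ((norm ((\<Sum>j\<in>S. l j *\<^sub>R c j) - c i))\<^sup>2 - r i)) \<le> 0"
  shows "\<exists>z. \<forall>i\<in>S. (norm (z - c i))\<^sup>2 \<le> r i"
proof -
  define g where "g i z = (norm (z - c i))\<^sup>2 - r i" for i z
  define G where "G z = Max ((\<lambda>i. g i z) ` S)" for z
  define K where "K = convex hull (c ` S)"
  have Kc: "compact K" "convex K" "K \<noteq> {}"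
    unfolding K_def using fin ne by (auto simp: finite_imp_compact_convex_hull convex_convex_hull)
  have Gc: "continuous_on K G"
    unfolding G_def g_def by (rule cont_Max[OF fin ne]) (intro continuous_intros)
  obtain t0 where t0K: "t0 \<in> K" and tmin: "\<forall>y\<in>K. G t0 \<le> G y"
    using continuous_attains_inf[OF Kc(1) Kc(3) Gc] by blast
  define m where "m = G t0"
  have gle: "\<forall>i\<in>S. g i t0 \<le> m"
    unfolding m_def G_def using fin by auto
  show ?thesis
  proof (cases "m \<le> 0")
    case True then show ?thesis using gle by (auto simp: g_def intro!: exI[of _ t0])
  next
    case False
    define J where "J = {i\<in>S. g i t0 = m}"
    have Jne: "J \<noteq> {}"
    proof -
      have "m \<in> (\<lambda>i. g i t0) ` S" unfolding m_def G_def using fin ne by (intro Max_in) auto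
      then show ?thesis unfolding J_def by auto
    qed
    have finJ: "finite J" and JS: "J \<subseteq> S" unfolding J_def using fin by auto
    define KJ where "KJ = convex hull (c ` J)"
    have KJc: "compact KJ" "convex KJ" "KJ \<noteq> {}" "closed KJ"
      unfolding KJ_def using finJ Jne
      by (auto simp: finite_imp_compact_convex_hull convex_convex_hull compact_imp_closed)
    have KJK: "KJ \<subseteq> K" unfolding KJ_def K_def using JS by (intro hull_mono) auto
    have "t0 \<in> KJ"
    proof (rule ccontr)
      assume nt: "t0 \<notin> KJ"
      have "continuous_on KJ (\<lambda>z. dist t0 z)" by (intro continuous_intros)
      then obtain p where pK: "p \<in> KJ" and pmin: "\<forall>z\<in>KJ. dist t0 p \<le> dist t0 z"
        using continuous_attains_inf[OF KJc(1) KJc(3)] by blast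
      have dot: "\<forall>z\<in>KJ. inner (t0 - p) (z - p) \<le> 0"
        using any_closest_point_dot[OF KJc(2) KJc(4) pK _ pmin] by blast
      define d where "d = (norm (p - t0))\<^sup>2"
      have "p \<noteq> t0" using pK nt by auto
      then have dpos: "d > 0" unfolding d_def by auto
      have cJ: "\<forall>j\<in>J. inner (t0 - p) (c j - p) \<le> 0"
        using dot unfolding KJ_def by (auto intro: hull_inc)
      define t where "t e = t0 + e *\<^sub>R (p - t0)" for e :: real
      have gt: "g i (t e) = g i t0 + 2 * e * inner (t0 - c i) (p - t0) + e\<^sup>2 * d" for i e
      proof -
        have "t e - c i = (t0 - c i) + e *\<^sub>R (p - t0)" unfolding t_def by (simp add: algebra_simps)
        then have "g i (t e) = (norm ((t0 - c i) + e *\<^sub>R (p - t0)))\<^sup>2 - r i" unfolding g_def by metis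
        then show ?thesis unfolding g_def d_def using norm_add_scale_sq[of "t0 - c i" e "p - t0"] by simp
      qed
      have ev1: "eventually (\<lambda>e. g i (t e) < m) (at_right 0)" if "i \<in> S" for i
      proof (cases "i \<in> J")
        case True
        then have gi: "g i t0 = m" unfolding J_def by auto
        have "inner (t0 - c i) (p - t0) \<le> - d"
        proof -
          have "inner (t0 - c i) (p - t0) = - d + inner (t0 - p) (c i - p)"
            unfolding d_def
            by (simp add: power2_norm_eq_inner inner_diff_left inner_diff_right algebra_simps inner_commute)
          then show ?thesis using cJ True by auto
        qed
        moreover have "eventually (\<lambda>e. 0 < e \<and> e < 1) (at_right (0::real))"
          by (simp add: eventually_at_right_field) (auto intro!: exI[of _ 1])
        ultimately show ?thesis
        proof (elim eventually_mono)
          fix e :: real assume h: "inner (t0 - c i) (p - t0) \<le> - d" and e: "0 < e \<and> e < 1"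
          have "2 * e * inner (t0 - c i) (p - t0) \<le> 2 * e * (-d)"
            using h e by (intro mult_left_mono) auto
          moreover have "e\<^sup>2 * d < 2 * e * d" using e dpos
            by (simp add: power2_eq_square)
          ultimately show "g i (t e) < m" unfolding gt gi by linarith
        qed
      next
        case False
        then have "g i t0 < m" using gle that unfolding J_def by force
        moreover have "((\<lambda>e. g i (t e)) \<longlongrightarrow> g i t0 + 2 * 0 * inner (t0 - c i) (p - t0) + 0\<^sup>2 * d) (at_right 0)"
          unfolding gt by (intro tendsto_intros)
        ultimately show ?thesis by (auto dest: order_tendstoD)
      qed
      have ev2: "eventually (\<lambda>e. 0 < e \<and> e < 1) (at_right (0::real))"
        by (simp add: eventually_at_right_field) (auto intro!: exI[of _ 1])
      have "eventually (\<lambda>e. (0 < e \<and> e < 1) \<and> (\<forall>i\<in>S. g i (t e) < m)) (at_right (0::real))"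
      proof (rule eventually_conj[OF ev2])
        show "eventually (\<lambda>e. \<forall>i\<in>S. g i (t e) < m) (at_right (0::real))"
          using ev1 by (intro eventually_ball_finite[OF fin]) auto
      qed
      then have "\<exists>e. (0 < e \<and> e < 1) \<and> (\<forall>i\<in>S. g i (t e) < m)"
        by (rule eventually_happens'[rotated]) simp
      then obtain e where e: "0 < e" "e < 1" and ge: "\<forall>i\<in>S. g i (t e) < m"
        by blast
      have "t e \<in> K"
      proof -
        have "t e = (1 - e) *\<^sub>R t0 + e *\<^sub>R p" unfolding t_def by (simp add: algebra_simps)
        then show ?thesis using convexD_alt[OF Kc(2) t0K, of p e] pK KJK e by auto
      qed
      moreover have "G (t e) < m"
        unfolding G_def using fin ne ge by (simp add: Max_less_iff)
      ultimately show False using tmin unfolding m_def by force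
    qed
    then obtain u where u: "\<forall>x\<in>c`J. 0 \<le> u x" "sum u (c`J) = 1" "(\<Sum>x\<in>c`J. u x *\<^sub>R x) = t0"
      unfolding KJ_def convex_hull_finite[OF finite_imageI[OF finJ]] by blast
    define l where "l = (\<lambda>i. if i \<in> J \<and> i = inv_into J c (c i) then u (c i) else 0)"
    have l0: "\<forall>i\<in>S. 0 \<le> l i" unfolding l_def using u(1) by auto
    have sl: "sum l S = 1"
      using sum_rep[OF fin JS l_def, of "\<lambda>_. 1::real"] u(2) by simp
    have slc: "(\<Sum>j\<in>S. l j *\<^sub>R c j) = t0"
      using sum_rep[OF fin JS l_def, of c] u(3) u(1)
      by (simp add: f_inv_into_f)
    have "(\<Sum>i\<in>S. l i * g i t0) = (\<Sum>x\<in>c`J. u x * g (inv_into J c x) t0)"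
      using sum_rep[OF fin JS l_def, of "\<lambda>i. g i t0"] by simp
    also have "\<dots> = (\<Sum>x\<in>c`J. u x * m)"
    proof (rule sum.cong)
      fix x assume "x \<in> c ` J"
      then have "inv_into J c x \<in> J" by (auto intro: inv_into_into)
      then show "u x * g (inv_into J c x) t0 = u x * m" unfolding J_def by auto
    qed simp
    also have "\<dots> = m" using u(2) by (simp add: sum_distrib_right[symmetric])
    finally have "(\<Sum>i\<in>S. l i * g i t0) = m" .
    moreover have "(\<Sum>i\<in>S. l i * g i t0) \<le> 0"
      using H[OF l0 sl] unfolding slc g_def .
    ultimately show ?thesis using False by linarith
  qed
qed



lemma mid_estimate:
  fixes a b :: "'a::real_inner"
  assumes K: "convex K" "a \<in> K" "b \<in> K" and lb: "\<forall>z\<in>K. \<delta> \<le> norm z" and d0: "0 \<le> \<delta>"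
    and h0: "0 \<le> \<eta>" and na: "norm a \<le> \<delta> + \<eta>" and nb: "norm b \<le> \<delta> + \<eta>"
  shows "(norm (a - b))\<^sup>2 \<le> 8 * \<delta> * \<eta> + 4 * \<eta>\<^sup>2"
proof -
  have "(1/2) *\<^sub>R a + (1/2) *\<^sub>R b \<in> K" using convexD[OF K(1) K(2) K(3), of "1/2" "1/2"] by simp
  then have "\<delta> \<le> norm ((1/2) *\<^sub>R a + (1/2) *\<^sub>R b)" using lb by blast
  also have "(1/2) *\<^sub>R a + (1/2) *\<^sub>R b = (1/2) *\<^sub>R (a + b)" by (simp add: algebra_simps)
  finally have m: "2 * \<delta> \<le> norm (a + b)" by simp
  have par: "(norm (a - b))\<^sup>2 + (norm (a + b))\<^sup>2 = 2 * (norm a)\<^sup>2 + 2 * (norm b)\<^sup>2"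
    unfolding power2_norm_eq_inner by (simp add: inner_add_left inner_add_right inner_diff_left inner_diff_right inner_commute)
  have "(2 * \<delta>)\<^sup>2 \<le> (norm (a + b))\<^sup>2" using m d0 by (intro power_mono) auto
  moreover have "(norm a)\<^sup>2 \<le> (\<delta> + \<eta>)\<^sup>2" using na by (intro power_mono) auto
  moreover have "(norm b)\<^sup>2 \<le> (\<delta> + \<eta>)\<^sup>2" using nb by (intro power_mono) auto
  ultimately show ?thesis using par by (simp add: power2_eq_square algebra_simps)
qed

lemma fip:
  fixes C :: "'i \<Rightarrow> 'a::{real_inner, complete_space} set"
  assumes i0: "i0 \<in> I" and cl: "\<And>i. i \<in> I \<Longrightarrow> closed (C i)" and cv: "\<And>i. i \<in> I \<Longrightarrow> convex (C i)"
    and bd: "bounded (C i0)"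
    and fi: "\<And>F. finite F \<Longrightarrow> F \<subseteq> I \<Longrightarrow> F \<noteq> {} \<Longrightarrow> (\<Inter>i\<in>F. C i) \<noteq> {}"
  shows "\<exists>p. \<forall>i\<in>I. p \<in> C i"
proof -
  obtain M where M: "\<forall>z\<in>C i0. norm z \<le> M" using bd bounded_iff by blast
  define X where "X F = (\<Inter>i\<in>insert i0 F. C i)" for F
  define D where "D F = Inf (norm ` X F)" for F
  define \<F> where "\<F> = {F. finite F \<and> F \<subseteq> I}"
  have Xne: "X F \<noteq> {}" if "F \<in> \<F>" for F
    using fi[of "insert i0 F"] that i0 unfolding X_def \<F>_def by auto
  have Xcv: "convex (X F)" if "F \<in> \<F>" for F
    unfolding X_def using that i0 cv unfolding \<F>_def by (intro convex_INT) auto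
  have bb: "bdd_below (norm ` X F)" for F by (rule bdd_belowI[of _ 0]) auto
  have Dle: "\<forall>z\<in>X F. D F \<le> norm z" for F unfolding D_def using bb by (auto intro: cInf_lower)
  have D0: "0 \<le> D F" if "F \<in> \<F>" for F
    unfolding D_def using Xne[OF that] by (intro cInf_greatest) auto
  have Dlt: "\<exists>z\<in>X F. norm z < D F + e" if "F \<in> \<F>" "e > 0" for F e
  proof -
    have "D F < D F + e" using that by simp
    then have "Inf (norm ` X F) < D F + e" unfolding D_def .
    then show ?thesis using cInf_less_iff[of "norm ` X F" "D F + e"] Xne[OF that(1)] bb[of F] by auto
  qed
  have DM: "D F \<le> M" if FF: "F \<in> \<F>" for F
  proof -
    obtain z where "z \<in> X F" using Xne[OF FF] by blast
    then show ?thesis using Dle[of F] M unfolding X_def by force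
  qed
  have Dmono: "D F \<le> D G" if "F \<subseteq> G" "G \<in> \<F>" for F G
  proof -
    have "X G \<subseteq> X F" using that(1) unfolding X_def by auto
    then have "norm ` X G \<subseteq> norm ` X F" by auto
    then show ?thesis unfolding D_def using Xne[OF that(2)] bb
      by (intro cInf_superset_mono) auto
  qed
  have Fne: "\<F> \<noteq> {}" unfolding \<F>_def by auto
  have bda: "bdd_above (D ` \<F>)" using DM by (intro bdd_aboveI[of _ M]) auto
  define d where "d = (SUP F\<in>\<F>. D F)"
  have Dd: "D F \<le> d" if "F \<in> \<F>" for F unfolding d_def using that bda by (rule cSUP_upper)
  have d0: "0 \<le> d" using Dd[of "{}"] D0[of "{}"] unfolding \<F>_def by auto
  define e where "e n = 1 / (real n + 1)" for n :: nat
  have epos: "e n > 0" for n unfolding e_def by auto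
  have e1: "e n \<le> 1" for n unfolding e_def by auto
  have emono: "e m \<le> e n" if "n \<le> m" for n m unfolding e_def using that by (simp add: frac_le)
  have "\<exists>F\<in>\<F>. d - e n < D F" for n
    using less_cSUP_iff[OF Fne bda, of "d - e n"] epos[of n] unfolding d_def by auto
  then obtain FF where FF: "\<And>n. FF n \<in> \<F>" "\<And>n. d - e n < D (FF n)" by metis
  define S where "S n = (\<Union>k\<le>n. FF k)" for n
  have SF: "S n \<in> \<F>" for n using FF(1) unfolding S_def \<F>_def by auto
  have Smono: "S n \<subseteq> S m" if "n \<le> m" for n m unfolding S_def using that by (auto intro: le_trans)
  have DS: "d - e n < D (S n)" for n
    using FF(2)[of n] Dmono[of "FF n" "S n"] SF[of n] unfolding S_def by force
  have "\<exists>z\<in>X (S n). norm z < D (S n) + e n" for n using Dlt[OF SF epos] .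
  then obtain p where pX: "\<And>n. p n \<in> X (S n)" and pn: "\<And>n. norm (p n) < D (S n) + e n" by metis
  define est where "est n = 16 * e n * (d + 1)" for n
  have XS: "X (S m) \<subseteq> X (S n)" if "n \<le> m" for n m
    using Smono[OF that] unfolding X_def by auto
  have key: "(norm (a - b))\<^sup>2 \<le> est n" if "a \<in> X (S n)" "b \<in> X (S n)"
    "norm a \<le> d + e n" "norm b \<le> d + e n" for a b n
  proof -
    have "(norm (a - b))\<^sup>2 \<le> 8 * D (S n) * (2 * e n) + 4 * (2 * e n)\<^sup>2"
      using that DS[of n] epos[of n]
      by (intro mid_estimate[OF Xcv[OF SF] _ _ Dle D0[OF SF]]) auto
    also have "\<dots> \<le> est n"
    proof -
      have "D (S n) \<le> d" using Dd SF by auto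
      then have "8 * D (S n) * (2 * e n) \<le> 16 * e n * d" using epos[of n] D0[OF SF] by (simp add: mult_right_mono)
      moreover have "4 * (2 * e n)\<^sup>2 \<le> 16 * e n" using e1[of n] epos[of n] by (simp add: power2_eq_square)
      ultimately show ?thesis unfolding est_def by (simp add: algebra_simps)
    qed
    finally show ?thesis .
  qed
  have pbound: "norm (p n) \<le> d + e n" for n using pn[of n] Dd[OF SF, of n] by linarith
  have pp: "(norm (p n - p m))\<^sup>2 \<le> est n" if "n \<le> m" for n m
    using key[of "p n" n "p m"] pX XS[OF that] pbound[of n] pbound[of m] emono[OF that] by force
  have esttend: "est \<longlonglongrightarrow> 0"
  proof -
    have "(\<lambda>n. 1 / real (Suc n)) \<longlonglongrightarrow> 0" using LIMSEQ_Suc[OF lim_1_over_n] by simp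
    then have "e \<longlonglongrightarrow> 0" unfolding e_def by (simp add: add.commute)
    then have "(\<lambda>n. 16 * e n * (d + 1)) \<longlonglongrightarrow> 16 * 0 * (d + 1)" by (intro tendsto_intros)
    then show ?thesis unfolding est_def by simp
  qed
  have evest: "eventually (\<lambda>n. est n < r\<^sup>2) sequentially" if "r > 0" for r
    using order_tendstoD(2)[OF esttend, of "r\<^sup>2"] that by auto
  have "Cauchy p"
  proof (rule CauchyI)
    fix r :: real assume r: "0 < r"
    obtain N where N: "\<forall>n\<ge>N. est n < r\<^sup>2" using evest[OF r] eventually_sequentially by metis
    have "norm (p m - p n) < r" if "m \<ge> N" "n \<ge> N" for m n
    proof -
      have "(norm (p m - p n))\<^sup>2 < r\<^sup>2"
      proof (cases "m \<le> n")
        case True then show ?thesis using pp[OF True] N that by force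
      next
        case False
        then have "(norm (p n - p m))\<^sup>2 < r\<^sup>2" using pp[of n m] N that by force
        then show ?thesis by (simp add: norm_minus_commute)
      qed
      then show ?thesis by (rule power2_less_imp_less) (use r in simp)
    qed
    then show "\<exists>M. \<forall>m\<ge>M. \<forall>n\<ge>M. norm (p m - p n) < r" by blast
  qed
  then obtain pl where pl: "p \<longlonglongrightarrow> pl" using Cauchy_convergent_iff convergent_def by blast
  have "pl \<in> C i" if iI: "i \<in> I" for i
  proof -
    have appr: "\<exists>q\<in>C i. (norm (p n - q))\<^sup>2 \<le> est n" for n
    proof -
      have SF': "insert i (S n) \<in> \<F>" using SF[of n] iI unfolding \<F>_def by auto
      obtain q where q: "q \<in> X (insert i (S n))" "norm q < D (insert i (S n)) + e n"
        using Dlt[OF SF' epos] by blast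
      have qX: "q \<in> X (S n)" "q \<in> C i" using q(1) unfolding X_def by auto
      have "norm q \<le> d + e n" using q(2) Dd[OF SF'] by linarith
      then have "(norm (p n - q))\<^sup>2 \<le> est n" using key[of "p n" n q] pX qX pbound by blast
      then show ?thesis using qX by blast
    qed
    show ?thesis
    proof (subst closed_approachable[OF cl[OF iI], symmetric], intro allI impI)
      fix r :: real assume r: "r > 0"
      have "eventually (\<lambda>n. est n < (r/2)\<^sup>2 \<and> dist (p n) pl < r/2) sequentially"
      proof (rule eventually_conj)
        show "eventually (\<lambda>n. est n < (r/2)\<^sup>2) sequentially" using evest[of "r/2"] r by simp
        show "eventually (\<lambda>n. dist (p n) pl < r/2) sequentially"
          using pl[unfolded tendsto_iff, rule_format, of "r/2"] r by simp
      qed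
      then obtain N where "\<forall>n\<ge>N. est n < (r/2)\<^sup>2 \<and> dist (p n) pl < r/2"
        unfolding eventually_sequentially by blast
      then obtain n where n: "est n < (r/2)\<^sup>2" "dist (p n) pl < r/2" by blast
      obtain q where q: "q \<in> C i" "(norm (p n - q))\<^sup>2 \<le> est n" using appr by blast
      have "(norm (p n - q))\<^sup>2 < (r/2)\<^sup>2" using q n by linarith
      then have "norm (p n - q) < r/2" by (rule power2_less_imp_less) (use r in simp)
      then have "dist q (p n) < r/2" by (simp add: dist_norm norm_minus_commute)
      then have "dist q pl < r" using n(2) dist_triangle[of q pl "p n"] by linarith
      then show "\<exists>y\<in>C i. dist y pl < r" using q(1) by blast
    qed
  qed
  then show ?thesis by blast
qed



lemma inner_ball_id:
  fixes z w v :: "'a::real_inner"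
  shows "inner (z - w) (z - v) = (norm (z - (1/2) *\<^sub>R (w + v)))\<^sup>2 - (norm ((1/2) *\<^sub>R (w - v)))\<^sup>2"
  unfolding power2_norm_eq_inner
  by (simp add: inner_diff_left inner_diff_right inner_add_left inner_add_right inner_commute algebra_simps)

lemma C_cball:
  fixes w v :: "'a::real_inner"
  shows "{z. inner (z - w) (z - v) \<le> 0} = cball ((1/2) *\<^sub>R (w + v)) (norm ((1/2) *\<^sub>R (w - v)))"
proof -
  have h: "inner (z - w) (z - v) \<le> 0 \<longleftrightarrow> norm (z - (1/2) *\<^sub>R (w + v)) \<le> norm ((1/2) *\<^sub>R (w - v))" for z
  proof -
    have sq: "(x\<^sup>2 - y\<^sup>2 \<le> 0) = (x \<le> y)" if "0 \<le> x" "0 \<le> y" for x y :: real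
      using that by (metis diff_le_0_iff_le power2_le_imp_le power_mono)
    show ?thesis unfolding inner_ball_id by (rule sq) simp_all
  qed
  have d: "dist ((1/2) *\<^sub>R (w + v)) z = norm (z - (1/2) *\<^sub>R (w + v))" for z
    by (metis dist_commute dist_norm)
  show ?thesis by (rule set_eqI) (simp only: mem_Collect_eq mem_cball d h)
qed

lemma mono_sum:
  fixes l :: "'i \<Rightarrow> real" and w a :: "'i \<Rightarrow> 'a::real_inner"
  assumes fin: "finite F" and l0: "\<forall>i\<in>F. 0 \<le> l i" and l1: "sum l F = 1"
    and mon: "\<forall>i\<in>F. \<forall>j\<in>F. inner (a i - a j) (w i - w j) \<ge> 0"
  shows "inner (\<Sum>i\<in>F. l i *\<^sub>R a i) (\<Sum>i\<in>F. l i *\<^sub>R w i) \<le> (\<Sum>i\<in>F. l i * inner (a i) (w i))"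
proof -
  define P where "P = (\<Sum>i\<in>F. l i * inner (a i) (w i))"
  define Q where "Q = inner (\<Sum>i\<in>F. l i *\<^sub>R a i) (\<Sum>i\<in>F. l i *\<^sub>R w i)"
  have h1: "(\<Sum>i\<in>F. \<Sum>j\<in>F. l i * l j * inner (a i) (w i)) = P"
  proof -
    have "(\<Sum>j\<in>F. l i * l j * inner (a i) (w i)) = (\<Sum>j\<in>F. l j) * (l i * inner (a i) (w i))" for i
      by (simp add: sum_distrib_right sum_distrib_left mult_ac)
    then show ?thesis unfolding P_def l1 by simp
  qed
  have h4: "(\<Sum>i\<in>F. \<Sum>j\<in>F. l i * l j * inner (a j) (w j)) = P"
  proof -
    have "(\<Sum>i\<in>F. \<Sum>j\<in>F. l i * l j * inner (a j) (w j)) = (\<Sum>j\<in>F. \<Sum>i\<in>F. l i * l j * inner (a j) (w j))"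
      by (rule sum.swap)
    also have "\<dots> = (\<Sum>i\<in>F. \<Sum>j\<in>F. l i * l j * inner (a i) (w i))"
      by (simp add: mult.commute)
    finally show ?thesis using h1 by simp
  qed
  have h2: "(\<Sum>i\<in>F. \<Sum>j\<in>F. l i * l j * inner (a i) (w j)) = Q"
    unfolding Q_def inner_sum_left by (simp add: inner_sum_right sum_distrib_left mult_ac)
  have h3: "(\<Sum>i\<in>F. \<Sum>j\<in>F. l i * l j * inner (a j) (w i)) = Q"
  proof -
    have "(\<Sum>i\<in>F. \<Sum>j\<in>F. l i * l j * inner (a j) (w i)) = (\<Sum>j\<in>F. \<Sum>i\<in>F. l i * l j * inner (a j) (w i))"
      by (rule sum.swap)
    also have "\<dots> = (\<Sum>i\<in>F. \<Sum>j\<in>F. l i * l j * inner (a i) (w j))"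
      by (simp add: mult.commute)
    finally show ?thesis using h2 by simp
  qed
  have "0 \<le> (\<Sum>i\<in>F. \<Sum>j\<in>F. l i * l j * inner (a i - a j) (w i - w j))"
    using l0 mon by (intro sum_nonneg) auto
  also have "\<dots> = (\<Sum>i\<in>F. \<Sum>j\<in>F. (l i * l j * inner (a i) (w i) - l i * l j * inner (a i) (w j))
      - (l i * l j * inner (a j) (w i) - l i * l j * inner (a j) (w j)))"
    by (intro sum.cong refl) (simp add: inner_diff_left inner_diff_right algebra_simps)
  also have "\<dots> = 2 * P - 2 * Q"
    by (simp only: sum_subtractf h1 h2 h3 h4)
  finally have "0 \<le> 2 * P - 2 * Q" .
  then have "Q \<le> P" by linarith
  then show ?thesis unfolding P_def Q_def .
qed



lemma resolvent_eq:
  fixes A :: "'a::real_inner \<Rightarrow> 'a set"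
  assumes mon: "monotone_op A" and lam: "0 < lam" and a: "a \<in> A z" and y: "y = z + lam *\<^sub>R a"
  shows "resolvent lam A y = z"
  unfolding resolvent_def
proof (rule the_equality)
  show "\<exists>a\<in>A z. y = z + lam *\<^sub>R a" using a y by blast
  fix z' assume "\<exists>a\<in>A z'. y = z' + lam *\<^sub>R a"
  then obtain a' where a': "a' \<in> A z'" "y = z' + lam *\<^sub>R a'" by blast
  have d: "z - z' = lam *\<^sub>R (a' - a)" using y a'(2) by (simp add: algebra_simps)
  have "0 \<le> inner (a - a') (z - z')" using mon a a'(1) unfolding monotone_op_def by blast
  also have "inner (a - a') (z - z') = - lam * (norm (a - a'))\<^sup>2"
    unfolding d power2_norm_eq_inner by (simp add: inner_diff_left inner_diff_right algebra_simps inner_commute)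
  finally have "(norm (a - a'))\<^sup>2 \<le> 0" using lam by (simp add: mult_le_0_iff)
  then have "a = a'" by simp
  then show "z' = z" using d by simp
qed

lemma minty:
  fixes A :: "'a::{real_inner,complete_space} \<Rightarrow> 'a set"
  assumes mm: "maximally_monotone A" and lam: "0 < lam"
  shows "\<exists>z. \<exists>a\<in>A z. y = z + lam *\<^sub>R a"
proof -
  have mon: "monotone_op A" using mm unfolding maximally_monotone_def by auto
  define I where "I = {(w,a). a \<in> A w}"
  define v where "v i = y - lam *\<^sub>R snd i" for i :: "'a \<times> 'a"
  define C where "C i = {z. inner (z - fst i) (z - v i) \<le> 0}" for i
  have Ccb: "C i = cball ((1/2) *\<^sub>R (fst i + v i)) (norm ((1/2) *\<^sub>R (fst i - v i)))" for i
    unfolding C_def by (rule C_cball)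
  have Ine: "I \<noteq> {}"
  proof
    assume I0: "I = {}"
    define A' where "A' x = (if x = y then {0::'a} else {})" for x :: 'a
    have "monotone_op A'" unfolding monotone_op_def A'_def by auto
    moreover have "\<forall>x. A x \<subseteq> A' x" using I0 unfolding I_def by auto
    ultimately have "A' = A" using mm unfolding maximally_monotone_def by blast
    then have "A y = A' y" by simp
    also have "A' y = {0}" unfolding A'_def by simp
    finally have "0 \<in> A y" by simp
    then show False using I0 unfolding I_def by auto
  qed
  then obtain i0 where i0: "i0 \<in> I" by auto
  have "\<exists>p. \<forall>i\<in>I. p \<in> C i"
  proof (rule fip[OF i0])
    show "closed (C i)" for i unfolding Ccb by simp
    show "convex (C i)" for i unfolding Ccb by simp
    show "bounded (C i0)" unfolding Ccb by simp
    fix F assume F: "finite F" "F \<subseteq> I" "F \<noteq> {}"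
    define c where "c i = (1/2) *\<^sub>R (fst i + v i)" for i
    define r where "r i = (norm ((1/2) *\<^sub>R (fst i - v i)))\<^sup>2" for i
    have trm: "(norm (z - c i))\<^sup>2 - r i = inner (z - fst i) (z - v i)" for i z
      using inner_ball_id[of z "fst i" "v i"] unfolding c_def r_def by simp
    have "\<exists>z. \<forall>i\<in>F. (norm (z - c i))\<^sup>2 \<le> r i"
    proof (rule finite_quad[OF F(1) F(3)])
      fix l :: "'a\<times>'a \<Rightarrow> real" assume l0: "\<forall>i\<in>F. 0 \<le> l i" and l1: "sum l F = 1"
      define z where "z = (\<Sum>j\<in>F. l j *\<^sub>R c j)"
      define W where "W = (\<Sum>j\<in>F. l j *\<^sub>R fst j)"
      define Aa where "Aa = (\<Sum>j\<in>F. l j *\<^sub>R snd j)"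
      define V where "V = (\<Sum>j\<in>F. l j *\<^sub>R v j)"
      have V: "V = y - lam *\<^sub>R Aa"
      proof -
        have "V = (\<Sum>j\<in>F. l j *\<^sub>R y) - (\<Sum>j\<in>F. l j *\<^sub>R (lam *\<^sub>R snd j))"
          unfolding V_def v_def by (simp add: scaleR_diff_right sum_subtractf)
        also have "(\<Sum>j\<in>F. l j *\<^sub>R y) = y" using l1 by (simp add: scaleR_sum_left[symmetric])
        also have "(\<Sum>j\<in>F. l j *\<^sub>R (lam *\<^sub>R snd j)) = lam *\<^sub>R Aa"
          unfolding Aa_def by (simp add: scaleR_sum_right scaleR_scaleR mult.commute)
        finally show ?thesis .
      qed
      have z: "z = (1/2) *\<^sub>R (W + V)"
        unfolding z_def c_def W_def V_def
        by (simp add: scaleR_add_right sum.distrib scaleR_sum_right scaleR_scaleR mult.commute)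
      have s1: "(\<Sum>i\<in>F. l i * inner (z - fst i) (z - v i))
          = inner z z - inner z W - inner z V + (\<Sum>i\<in>F. l i * inner (fst i) (v i))"
      proof -
        have "(\<Sum>i\<in>F. l i * inner (z - fst i) (z - v i))
          = (\<Sum>i\<in>F. l i * inner z z) - (\<Sum>i\<in>F. l i * inner z (fst i)) - (\<Sum>i\<in>F. l i * inner z (v i))
            + (\<Sum>i\<in>F. l i * inner (fst i) (v i))"
          by (simp add: inner_diff_left inner_diff_right inner_commute algebra_simps sum.distrib sum_subtractf)
        also have "(\<Sum>i\<in>F. l i * inner z z) = inner z z" using l1 by (simp add: sum_distrib_right[symmetric])
        also have "(\<Sum>i\<in>F. l i * inner z (fst i)) = inner z W" unfolding W_def by (simp add: inner_sum_right)
        also have "(\<Sum>i\<in>F. l i * inner z (v i)) = inner z V" unfolding V_def by (simp add: inner_sum_right)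
        finally show ?thesis .
      qed
      have s2: "(\<Sum>i\<in>F. l i * inner (fst i) (v i)) = inner W y - lam * (\<Sum>i\<in>F. l i * inner (snd i) (fst i))"
      proof -
        have "(\<Sum>i\<in>F. l i * inner (fst i) (v i)) = (\<Sum>i\<in>F. l i * inner (fst i) y) - lam * (\<Sum>i\<in>F. l i * inner (snd i) (fst i))"
          unfolding v_def by (simp add: inner_diff_right sum_subtractf sum_distrib_left algebra_simps inner_commute)
        also have "(\<Sum>i\<in>F. l i * inner (fst i) y) = inner W y" unfolding W_def by (simp add: inner_sum_left)
        finally show ?thesis .
      qed
      have s3: "inner Aa W \<le> (\<Sum>i\<in>F. l i * inner (snd i) (fst i))"
        unfolding Aa_def W_def
      proof (rule mono_sum[OF F(1) l0 l1])
        show "\<forall>i\<in>F. \<forall>j\<in>F. 0 \<le> inner (snd i - snd j) (fst i - fst j)"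
          using F(2) mon unfolding I_def monotone_op_def by fastforce
      qed
      have "(\<Sum>i\<in>F. l i * ((norm (z - c i))\<^sup>2 - r i)) = (\<Sum>i\<in>F. l i * inner (z - fst i) (z - v i))"
        by (simp add: trm)
      also have "\<dots> \<le> inner z z - inner z W - inner z V + (inner W y - lam * inner Aa W)"
        unfolding s1 s2 using s3 lam by (simp add: mult_left_mono)
      also have "\<dots> = - (norm ((1/2) *\<^sub>R (W - V)))\<^sup>2"
        unfolding z V power2_norm_eq_inner
        by (simp add: inner_diff_left inner_diff_right inner_add_left inner_add_right inner_commute algebra_simps)
      also have "\<dots> \<le> 0" by simp
      finally show "(\<Sum>i\<in>F. l i * ((norm ((\<Sum>j\<in>F. l j *\<^sub>R c j) - c i))\<^sup>2 - r i)) \<le> 0"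
        unfolding z_def .
    qed
    then obtain z0 where z0: "\<forall>i\<in>F. (norm (z0 - c i))\<^sup>2 \<le> r i" by blast
    have "\<forall>i\<in>F. z0 \<in> C i"
    proof
      fix i assume "i \<in> F"
      then have "(norm (z0 - c i))\<^sup>2 - r i \<le> 0" using z0 by auto
      then show "z0 \<in> C i" unfolding C_def trm by simp
    qed
    then show "(\<Inter>i\<in>F. C i) \<noteq> {}" by auto
  qed
  then obtain p where p: "\<forall>i\<in>I. p \<in> C i" ..
  define b where "b = (1/lam) *\<^sub>R (y - p)"
  define A' where "A' x = A x \<union> (if x = p then {b} else {})" for x
  have key: "inner (b - a) (p - w) \<ge> 0" if "a \<in> A w" for a w
  proof -
    have "(w,a) \<in> I" using that I_def by auto
    then have h: "inner (p - w) (p - (y - lam *\<^sub>R a)) \<le> 0" using p unfolding C_def v_def by auto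
    have "lam *\<^sub>R (b - a) = -(p - (y - lam *\<^sub>R a))" unfolding b_def using lam by (simp add: algebra_simps)
    then have "lam * inner (b - a) (p - w) = - inner (p - w) (p - (y - lam *\<^sub>R a))"
      by (metis inner_scaleR_left inner_minus_left inner_commute)
    then have "0 \<le> lam * inner (b - a) (p - w)" using h by linarith
    then show ?thesis using lam by (simp add: zero_le_mult_iff)
  qed
  have "monotone_op A'"
    unfolding monotone_op_def
  proof (intro allI impI)
    fix x1 x2 u1 u2 assume u1: "u1 \<in> A' x1" and u2: "u2 \<in> A' x2"
    show "0 \<le> inner (u1 - u2) (x1 - x2)"
    proof (cases "u1 \<in> A x1")
      case True
      show ?thesis
      proof (cases "u2 \<in> A x2")
        case True
        then show ?thesis using \<open>u1 \<in> A x1\<close> mon unfolding monotone_op_def by blast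
      next
        case False
        then have "x2 = p" "u2 = b" using u2 unfolding A'_def by (auto split: if_splits)
        then have "0 \<le> inner (u2 - u1) (x2 - x1)" using key[OF True] by simp
        also have "inner (u2 - u1) (x2 - x1) = inner (u1 - u2) (x1 - x2)"
          by (metis inner_minus_left inner_minus_right minus_diff_eq minus_minus)
        finally show ?thesis .
      qed
    next
      case False
      then have x1: "x1 = p" "u1 = b" using u1 unfolding A'_def by (auto split: if_splits)
      show ?thesis
      proof (cases "u2 \<in> A x2")
        case True
        then show ?thesis using key[OF True] x1 by simp
      next
        case False
        then have "x2 = p" "u2 = b" using u2 unfolding A'_def by (auto split: if_splits)
        then show ?thesis using x1 by simp
      qed
    qed
  qed
  moreover have "\<forall>x. A x \<subseteq> A' x" unfolding A'_def by auto
  ultimately have "A' = A" using mm unfolding maximally_monotone_def by blast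
  then have "A p = A' p" by simp
  also have "A' p = A p \<union> {b}" unfolding A'_def by simp
  finally have "b \<in> A p" by blast
  moreover have "y = p + lam *\<^sub>R b" unfolding b_def using lam by simp
  ultimately show ?thesis by blast
qed



lemma final_ineq:
  fixes lam L ee ff hh qq bk b1 Df Dh nq nh eps :: real
  assumes lam: "0 < lam" and L: "0 \<le> L" and lamL: "lam * L < 1/2"
    and eps: "eps = 1/2 - lam * L"
    and F1: "ee + hh \<le> ff - 2 * lam * bk - 2 * lam * (Df + Dh)"
    and b1: "0 \<le> b1"
    and CS: "\<bar>Dh\<bar> \<le> L * nq * nh"
    and nq: "0 \<le> nq" and nh: "0 \<le> nh" and qq: "qq = nq\<^sup>2" and hh: "hh = nh\<^sup>2"
  shows "ee + 2 * lam * (bk - b1) + (1/2 + eps) * hh \<le> ff + 2 * lam * (- Df) + 1/2 * qq"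
proof -
  have "2 * nq * nh \<le> qq + hh" unfolding qq hh using sum_squares_bound[of nq nh] by (simp add: power2_eq_square)
  then have a: "lam * L * (2 * nq * nh) \<le> lam * L * (qq + hh)" using lam L by (intro mult_left_mono) auto
  have b: "- Dh \<le> L * nq * nh" using CS by linarith
  then have c: "lam * (- Dh) \<le> lam * (L * nq * nh)" using lam by (intro mult_left_mono) auto
  have d: "lam * L * qq \<le> 1/2 * qq" using lamL qq by (intro mult_right_mono) auto
  have e: "2 * lam * b1 \<ge> 0" using lam b1 by simp
  have f: "(1/2 + eps) * hh = hh - lam * L * hh" unfolding eps by (simp add: algebra_simps)
  show ?thesis using F1 a c d e f by (simp add: algebra_simps)
qed



theorem lemma6p1:
  fixes A :: "'a::{real_inner, complete_space} \<Rightarrow> 'a set"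
    and Bi :: "nat \<Rightarrow> 'a \<Rightarrow> 'a"
    and B :: "'a \<Rightarrow> 'a"
    and n :: nat and L lam :: real
    and xs x0 xm1 :: 'a
  assumes "maximally_monotone A"
    and "n \<ge> 1"
    and "B = (\<lambda>y. (1 / real n) *\<^sub>R (\<Sum>i=1..n. Bi i y))"
    and "\<forall>y z. inner (B y - B z) (y - z) \<ge> 0"
    and "\<forall>i\<in>{1..n}. L-lipschitz_on UNIV (Bi i)"
    and "\<exists>a \<in> A xs. a + B xs = 0"
    and "0 < lam" and "lam < 1 / (2 * L)"
  shows "\<exists>\<epsilon>>0. \<forall>(idx :: nat \<Rightarrow> nat) (x :: int \<Rightarrow> 'a).
           (\<forall>k. idx k \<in> {1..n}) \<and> x 0 = x0 \<and> x (-1) = xm1 \<and>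
           (\<forall>k::nat. x (int k + 1) = resolvent lam A
               (x (int k) - lam *\<^sub>R B (x (int k))
                 - lam *\<^sub>R (Bi (idx k) (x (int k)) - Bi (idx k) (x (int k - 1)))))
           \<longrightarrow> (\<forall>k::nat.
                 (norm (x (int k + 1) - xs))\<^sup>2
                 + 2 * lam * inner (B (x (int k + 1)) - B (x (int k))) (xs - x (int k + 1))
                 + (1/2 + \<epsilon>) * (norm (x (int k + 1) - x (int k)))\<^sup>2
               \<le> (norm (x (int k) - xs))\<^sup>2
                 + 2 * lam * inner (Bi (idx k) (x (int k)) - Bi (idx k) (x (int k - 1))) (xs - x (int k))
                 + 1/2 * (norm (x (int k) - x (int k - 1)))\<^sup>2)"
proof -
  note mm = assms(1) and n1 = assms(2) and Bmon = assms(4) and lip = assms(5) and zer = assms(6)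
    and lam = assms(7) and lamL0 = assms(8)
  have mon: "monotone_op A" using mm unfolding maximally_monotone_def by auto
  have L0: "0 \<le> L" using lip n1 lipschitz_on_nonneg by fastforce
  have Lpos: "0 < L"
  proof (rule ccontr)
    assume "\<not> 0 < L"
    then have "L = 0" using L0 by simp
    then show False using lam lamL0 by simp
  qed
  have lamL: "lam * L < 1/2"
  proof -
    have "lam * (2 * L) < 1" using lamL0 Lpos by (simp add: pos_less_divide_eq)
    then show ?thesis by simp
  qed
  define eps where "eps = 1/2 - lam * L"
  have epos: "eps > 0" unfolding eps_def using lamL by simp
  obtain as where as: "as \<in> A xs" "as + B xs = 0" using zer by blast
  show ?thesis
  proof (rule exI[of _ eps], intro conjI allI impI)
    show "eps > 0" by fact
    fix idx :: "nat \<Rightarrow> nat" and x :: "int \<Rightarrow> 'a" and k :: nat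
    assume H: "(\<forall>k. idx k \<in> {1..n}) \<and> x 0 = x0 \<and> x (-1) = xm1 \<and>
           (\<forall>k::nat. x (int k + 1) = resolvent lam A
               (x (int k) - lam *\<^sub>R B (x (int k))
                 - lam *\<^sub>R (Bi (idx k) (x (int k)) - Bi (idx k) (x (int k - 1)))))"
    define x1 where "x1 = x (int k + 1)"
    define xm where "xm = x (int k - 1)"
    define xk where "xk = x (int k)"
    define i where "i = idx k"
    define D where "D = Bi i xk - Bi i xm"
    have iin: "i \<in> {1..n}" using H unfolding i_def by blast
    have rec: "x1 = resolvent lam A (xk - lam *\<^sub>R B xk - lam *\<^sub>R D)"
      using H unfolding x1_def xk_def D_def i_def xm_def by blast
    obtain z a where a: "a \<in> A z" "xk - lam *\<^sub>R B xk - lam *\<^sub>R D = z + lam *\<^sub>R a"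
      using minty[OF mm lam] by blast
    have "x1 = z" using rec resolvent_eq[OF mon lam a] by simp
    then have a1: "a \<in> A x1" and a2: "lam *\<^sub>R a = xk - x1 - lam *\<^sub>R B xk - lam *\<^sub>R D"
      using a by (auto simp: algebra_simps)
    define e where "e = x1 - xs"
    define f where "f = xk - xs"
    define h where "h = x1 - xk"
    define q where "q = xk - xm"
    have m1: "0 \<le> inner (a - as) (x1 - xs)" using mon a1 as(1) unfolding monotone_op_def by blast
    have "lam *\<^sub>R (a - as) = (f - e) - lam *\<^sub>R (B xk - B xs) - lam *\<^sub>R D"
      using a2 as(2) unfolding e_def f_def
      by (simp add: algebra_simps eq_neg_iff_add_eq_0[symmetric])
    then have "lam * inner (a - as) (x1 - xs) = inner ((f - e) - lam *\<^sub>R (B xk - B xs) - lam *\<^sub>R D) e"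
      unfolding e_def by (metis inner_scaleR_left)
    also have "\<dots> = inner (f - e) e - lam * inner (B xk - B xs) e - lam * (inner D f + inner D h)"
    proof -
      have "e = f + h" unfolding e_def f_def h_def by simp
      then have "inner D e = inner D f + inner D h" by (simp add: inner_add_right)
      then show ?thesis by (simp add: inner_diff_left)
    qed
    finally have F0: "0 \<le> inner (f - e) e - lam * inner (B xk - B xs) e - lam * (inner D f + inner D h)"
      using m1 lam by (metis mult_nonneg_nonneg less_eq_real_def)
    have id1: "2 * inner (f - e) e = (norm f)\<^sup>2 - (norm e)\<^sup>2 - (norm h)\<^sup>2"
    proof -
      have hh: "h = e - f" unfolding e_def f_def h_def by simp
      show ?thesis unfolding hh power2_norm_eq_inner
        by (simp add: inner_diff_left inner_diff_right inner_commute algebra_simps)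
    qed
    have F1: "(norm e)\<^sup>2 + (norm h)\<^sup>2 \<le> (norm f)\<^sup>2 - 2 * lam * inner (B xk - B xs) e - 2 * lam * (inner D f + inner D h)"
      using F0 id1 by linarith
    have b1: "0 \<le> inner (B x1 - B xs) e" using Bmon unfolding e_def by blast
    have CS: "\<bar>inner D h\<bar> \<le> L * norm q * norm h"
    proof -
      have "\<bar>inner D h\<bar> \<le> norm D * norm h" by (rule Cauchy_Schwarz_ineq2)
      also have "norm D \<le> L * norm q"
        unfolding D_def q_def using lip iin by (intro lipschitz_on_normD) auto
      then have "norm D * norm h \<le> L * norm q * norm h" by (intro mult_right_mono) auto
      finally show ?thesis .
    qed
    have main: "(norm e)\<^sup>2 + 2 * lam * (inner (B xk - B xs) e - inner (B x1 - B xs) e) + (1/2 + eps) * (norm h)\<^sup>2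
        \<le> (norm f)\<^sup>2 + 2 * lam * (- inner D f) + 1/2 * (norm q)\<^sup>2"
      by (rule final_ineq[OF lam L0 lamL eps_def F1 b1 CS]) auto
    have t1: "inner (B x1 - B xk) (xs - x1) = inner (B xk - B xs) e - inner (B x1 - B xs) e"
      unfolding e_def by (simp add: inner_diff_left inner_diff_right algebra_simps)
    have t2: "inner D (xs - xk) = - inner D f" unfolding f_def by (simp add: inner_diff_right)
    have "(norm (x1 - xs))\<^sup>2 + 2 * lam * inner (B x1 - B xk) (xs - x1) + (1/2 + eps) * (norm (x1 - xk))\<^sup>2
        \<le> (norm (xk - xs))\<^sup>2 + 2 * lam * inner D (xs - xk) + 1/2 * (norm (xk - xm))\<^sup>2"
      using main unfolding t1 t2 e_def f_def h_def q_def .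
    then show "(norm (x (int k + 1) - xs))\<^sup>2
                 + 2 * lam * inner (B (x (int k + 1)) - B (x (int k))) (xs - x (int k + 1))
                 + (1/2 + eps) * (norm (x (int k + 1) - x (int k)))\<^sup>2
               \<le> (norm (x (int k) - xs))\<^sup>2
                 + 2 * lam * inner (Bi (idx k) (x (int k)) - Bi (idx k) (x (int k - 1))) (xs - x (int k))
                 + 1/2 * (norm (x (int k) - x (int k - 1)))\<^sup>2"
      unfolding x1_def xk_def xm_def D_def i_def .
  qed
qed

end
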